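(* For any finite alphabet $\mathfrak{G}$, the $\mathfrak{G}$-prefix poset is a meet-semilattice for the operation $\wedge$. Moreover, each interval $[\mathfrak{s},\mathfrak{t}]$ of this poset is a distributive lattice for the operations $\wedge$ and $\vee$.
   Context: $\mathfrak{G}$ is a finite alphabet (letters with arities $\geq 1$). A $\mathfrak{G}$-tree is either the leaf (the tree with no internal node) or $\mathtt{a}[\mathfrak{t}_1,\dots,\mathfrak{t}_{|\mathtt{a}|}]$, a root decorated by $\mathtt{a}\in\mathfrak{G}$ with children $\mathfrak{t}_1,\dots,\mathfrak{t}_{|\mathtt{a}|}$. The $\mathfrak{G}$-prefix poset is the set of $\mathfrak{G}$-trees ordered by $\mathfrak{s}\preceq\mathfrak{t}$ iff $\mathfrak{s}$ is a prefix of $\mathfrak{t}$, i.e. $\mathfrak{t}$ is obtained by grafting some $\mathfrak{G}$-trees onto the leaves of $\mathfrak{s}$. The intersection $\wedge$ is defined by: $\mathfrak{t}\wedge\text{leaf} = \text{leaf} = \text{leaf}\wedge\mathfrak{t}$; $\mathtt{a}[\dots]\wedge\mathtt{b}[\dots] = \text{leaf}$ if $\mathtt{a}\neq\mathtt{b}$; $\mathtt{a}[\mathfrak{t}_1,\dots,\mathfrak{t}_k]\wedge\mathtt{a}[\mathfrak{t}'_1,\dots,\mathfrak{t}'_k] = \mathtt{a}[\mathfrak{t}_1\wedge\mathfrak{t}'_1,\dots,\mathfrak{t}_k\wedge\mathfrak{t}'_k]$. The partial union $\vee$ is defined by: $\mathfrak{t}\vee\text{leaf} = \mathfrak{t} =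 \text{leaf}\vee\mathfrak{t}$; $\mathtt{a}[\mathfrak{t}_1,\dots,\mathfrak{t}_k]\vee\mathtt{a}[\mathfrak{t}'_1,\dots,\mathfrak{t}'_k] = \mathtt{a}[\mathfrak{t}_1\vee\mathfrak{t}'_1,\dots,\mathfrak{t}_k\vee\mathfrak{t}'_k]$; and it is undefined on two trees whose roots have different decorations. *)

theory Defs
  imports Main
begin

text \<open>Trees over an alphabet: Leaf is the tree with no internal node;
  Node a ts is a root decorated by the letter a with children ts.\<close>
datatype 'a gtree = Leaf | Node 'a "'a gtree list"

inductive is_gtree :: "'a set \<Rightarrow> ('a \<Rightarrow> nat) \<Rightarrow> 'a gtree \<Rightarrow> bool" for G ar where
  leaf: "is_gtree G ar Leaf"
| node: "\<lbrakk>a \<in> G; length ts = ar a; \<forall>t \<in> set ts. is_gtree G ar t\<rbrakk> \<Longrightarrow> is_gtree G ar (Node a ts)"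

text \<open>Prefix order: t is obtained from s by grafting trees onto the leaves of s.\<close>
inductive prefix_tree :: "'a gtree \<Rightarrow> 'a gtree \<Rightarrow> bool" (infix "\<preceq>\<^sub>t" 50) where
  leaf: "Leaf \<preceq>\<^sub>t t"
| node: "list_all2 prefix_tree ss ts \<Longrightarrow> Node a ss \<preceq>\<^sub>t Node a ts"

function (sequential) meet :: "'a gtree \<Rightarrow> 'a gtree \<Rightarrow> 'a gtree" (infixl "\<sqinter>\<^sub>t" 70) where
  "meet Leaf t = Leaf"
| "meet (Node a ss) Leaf = Leaf"
| "meet (Node a ss) (Node b ts) =
     (if a = b \<and> length ss = length ts
      then Node a (map (\<lambda>(x, y). meet x y) (zip ss ts)) else Leaf)"
  by pat_completeness auto
termination by (relation "measure (\<lambda>(s, t). size s)")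
  (auto dest!: set_zip_leftD simp: less_Suc_eq_le intro: size_list_estimation')

function (sequential) join :: "'a gtree \<Rightarrow> 'a gtree \<Rightarrow> 'a gtree option" where
  "join Leaf t = Some t"
| "join (Node a ss) Leaf = Some (Node a ss)"
| "join (Node a ss) (Node b ts) =
     (if a = b \<and> length ss = length ts
      then map_option (Node a) (those (map (\<lambda>(x, y). join x y) (zip ss ts))) else None)"
  by pat_completeness auto
termination by (relation "measure (\<lambda>(s, t). size s)")
  (auto dest!: set_zip_leftD simp: less_Suc_eq_le intro: size_list_estimation')

definition interval :: "'a set \<Rightarrow> ('a \<Rightarrow> nat) \<Rightarrow> 'a gtree \<Rightarrow> 'a gtree \<Rightarrow> 'a gtree set" where
  "interval G ar s t = {u. is_gtree G ar u \<and> s \<preceq>\<^sub>t u \<and> u \<preceq>\<^sub>t t}"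

end

theory Submission
  imports Defs
begin

lemma Leaf_prefix[simp]: "Leaf \<preceq>\<^sub>t t" by (rule prefix_tree.leaf)
lemma Node_Leaf[simp]: "\<not> Node a ss \<preceq>\<^sub>t Leaf" by (auto elim: prefix_tree.cases)
lemma prefix_Leaf_iff[simp]: "t \<preceq>\<^sub>t Leaf \<longleftrightarrow> t = Leaf" by (cases t) auto
lemma Node_Node[simp]: "Node a ss \<preceq>\<^sub>t Node b ts \<longleftrightarrow> a = b \<and> list_all2 prefix_tree ss ts"
  by (auto elim: prefix_tree.cases intro: prefix_tree.node)
lemma Node_prefix: "Node a ss \<preceq>\<^sub>t t \<longleftrightarrow> (\<exists>ts. t = Node a ts \<and> list_all2 prefix_tree ss ts)"
  by (cases t) auto

lemma prefix_refl: "t \<preceq>\<^sub>t t"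
  by (induction t) (auto simp: list_all2_conv_all_nth)

lemma prefix_antisym: "s \<preceq>\<^sub>t t \<Longrightarrow> t \<preceq>\<^sub>t s \<Longrightarrow> s = t"
proof (induction s arbitrary: t)
  case Leaf then show ?case by simp
next
  case (Node a ss)
  then obtain ts where t: "t = Node a ts" and l: "list_all2 prefix_tree ss ts" by (auto simp: Node_prefix)
  with Node.prems have l2: "list_all2 prefix_tree ts ss" by simp
  have "ss = ts" using l l2 Node.IH
    by (auto simp: list_all2_conv_all_nth intro!: nth_equalityI)
  then show ?case using t by simp
qed

lemma prefix_trans: "r \<preceq>\<^sub>t s \<Longrightarrow> s \<preceq>\<^sub>t t \<Longrightarrow> r \<preceq>\<^sub>t t"
proof (induction r arbitrary: s t)
  case Leaf then show ?case by simp
next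
  case (Node a rs)
  then obtain ss where s: "s = Node a ss" and l: "list_all2 prefix_tree rs ss" by (auto simp: Node_prefix)
  with Node.prems obtain ts where t: "t = Node a ts" and l2: "list_all2 prefix_tree ss ts" by (auto simp: Node_prefix)
  have "list_all2 prefix_tree rs ts" using l l2 Node.IH
    by (auto simp: list_all2_conv_all_nth)
  then show ?case using t by simp
qed

lemma prefix_gtree: "s \<preceq>\<^sub>t t \<Longrightarrow> is_gtree G ar t \<Longrightarrow> is_gtree G ar s"
proof (induction s arbitrary: t)
  case Leaf then show ?case by (simp add: is_gtree.leaf)
next
  case (Node a ss)
  then obtain ts where t: "t = Node a ts" and l: "list_all2 prefix_tree ss ts" by (auto simp: Node_prefix)
  from Node.prems t have g: "a \<in> G" "length ts = ar a" "\<forall>x\<in>set ts. is_gtree G ar x"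
    by (auto elim: is_gtree.cases)
  show ?case
  proof (rule is_gtree.node)
    show "a \<in> G" by fact
    show "length ss = ar a" using l g by (simp add: list_all2_lengthD)
    show "\<forall>x\<in>set ss. is_gtree G ar x"
    proof
      fix x assume "x \<in> set ss"
      then obtain i where i: "i < length ss" "x = ss ! i" by (auto simp: in_set_conv_nth)
      have "ss ! i \<preceq>\<^sub>t ts ! i" "i < length ts" using l i by (auto simp: list_all2_conv_all_nth)
      then show "is_gtree G ar x" using Node.IH i g by (auto simp: nth_mem)
    qed
  qed
qed

lemma meet_Node_same: "length ss = length ts \<Longrightarrow>
  Node a ss \<sqinter>\<^sub>t Node a ts = Node a (map (\<lambda>(x, y). x \<sqinter>\<^sub>t y) (zip ss ts))" by simp

lemma meet_le1: "s \<sqinter>\<^sub>t t \<preceq>\<^sub>t s"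
proof (induction s arbitrary: t)
  case Leaf then show ?case by simp
next
  case (Node a ss) then show ?case
    by (cases t) (auto simp: list_all2_conv_all_nth)
qed

lemma meet_le2: "s \<sqinter>\<^sub>t t \<preceq>\<^sub>t t"
proof (induction s arbitrary: t)
  case Leaf then show ?case by simp
next
  case (Node a ss) then show ?case
    by (cases t) (auto simp: list_all2_conv_all_nth)
qed

lemma meet_glb: "u \<preceq>\<^sub>t s \<Longrightarrow> u \<preceq>\<^sub>t t \<Longrightarrow> u \<preceq>\<^sub>t s \<sqinter>\<^sub>t t"
proof (induction u arbitrary: s t)
  case Leaf then show ?case by simp
next
  case (Node a us)
  then obtain ss ts where "s = Node a ss" "t = Node a ts" "list_all2 prefix_tree us ss" "list_all2 prefix_tree us ts"
    by (auto simp: Node_prefix)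
  then show ?case using Node.IH by (auto simp: list_all2_conv_all_nth)
qed

lemma those_nth: "length ys = length xs \<Longrightarrow> (\<forall>i<length xs. xs!i = Some (ys!i)) \<Longrightarrow> those xs = Some ys"
proof (induction xs arbitrary: ys)
  case Nil then show ?case by simp
next
  case (Cons x xs)
  then obtain y ys' where "ys = y # ys'" by (cases ys) auto
  with Cons show ?case by force
qed

lemma join_Leaf2[simp]: "join t Leaf = Some t" by (cases t) auto

lemma join_Node: "length ss = length ts \<Longrightarrow> length xs = length ss \<Longrightarrow>
  (\<forall>i<length ss. join (ss!i) (ts!i) = Some (xs!i)) \<Longrightarrow> join (Node a ss) (Node a ts) = Some (Node a xs)"
  by (simp add: those_nth)

lemma join_some: "u \<preceq>\<^sub>t t \<Longrightarrow> v \<preceq>\<^sub>t t \<Longrightarrow>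
  \<exists>x. join u v = Some x \<and> x \<preceq>\<^sub>t t \<and> u \<preceq>\<^sub>t x \<and> v \<preceq>\<^sub>t x \<and> (\<forall>z. u \<preceq>\<^sub>t z \<and> v \<preceq>\<^sub>t z \<longrightarrow> x \<preceq>\<^sub>t z)"
proof (induction u arbitrary: v t)
  case Leaf then show ?case by (auto simp: prefix_refl)
next
  case (Node a us)
  then obtain ts where t: "t = Node a ts" and l: "list_all2 prefix_tree us ts" by (auto simp: Node_prefix)
  show ?case
  proof (cases v)
    case Leaf then show ?thesis using Node.prems by (auto simp: prefix_refl)
  next
    case (Node b vs)
    with Node.prems t have b: "b = a" and lv: "list_all2 prefix_tree vs ts" by auto
    define n where "n = length us"
    have len: "length ts = n" "length vs = n" using l lv n_def by (auto simp: list_all2_lengthD)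
    have "\<forall>i. i < n \<longrightarrow> (\<exists>x. join (us!i) (vs!i) = Some x \<and> x \<preceq>\<^sub>t ts!i \<and> us!i \<preceq>\<^sub>t x \<and> vs!i \<preceq>\<^sub>t x
       \<and> (\<forall>z. us!i \<preceq>\<^sub>t z \<and> vs!i \<preceq>\<^sub>t z \<longrightarrow> x \<preceq>\<^sub>t z))"
      using Node.IH l lv len n_def by (auto simp: list_all2_conv_all_nth)
    then obtain f where f: "\<forall>i. i < n \<longrightarrow> (join (us!i) (vs!i) = Some (f i) \<and> f i \<preceq>\<^sub>t ts!i \<and> us!i \<preceq>\<^sub>t f i \<and> vs!i \<preceq>\<^sub>t f i
       \<and> (\<forall>z. us!i \<preceq>\<^sub>t z \<and> vs!i \<preceq>\<^sub>t z \<longrightarrow> f i \<preceq>\<^sub>t z))"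
      by metis
    define xs where "xs = map f [0..<n]"
    have j: "join (Node a us) (Node a vs) = Some (Node a xs)"
      by (rule join_Node) (use f len n_def xs_def in auto)
    show ?thesis
    proof (intro exI conjI allI impI)
      show "join (Node a us) v = Some (Node a xs)" using j Node b by simp
      show "Node a xs \<preceq>\<^sub>t t" using t f len xs_def by (auto simp: list_all2_conv_all_nth)
      show "Node a us \<preceq>\<^sub>t Node a xs" using f len xs_def n_def by (auto simp: list_all2_conv_all_nth)
      show "v \<preceq>\<^sub>t Node a xs" using Node b f len xs_def by (auto simp: list_all2_conv_all_nth)
      fix z assume z: "Node a us \<preceq>\<^sub>t z \<and> v \<preceq>\<^sub>t z"
      then obtain zs where zs: "z = Node a zs" "list_all2 prefix_tree us zs" "list_all2 prefix_tree vs zs"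
        using Node b by (auto simp: Node_prefix)
      then show "Node a xs \<preceq>\<^sub>t z" using f len xs_def n_def by (auto simp: list_all2_conv_all_nth)
    qed
  qed
qed

lemma distrib: "u \<preceq>\<^sub>t t \<Longrightarrow> v \<preceq>\<^sub>t t \<Longrightarrow> w \<preceq>\<^sub>t t \<Longrightarrow>
  map_option (\<lambda>x. u \<sqinter>\<^sub>t x) (join v w) = join (u \<sqinter>\<^sub>t v) (u \<sqinter>\<^sub>t w)"
proof (induction u arbitrary: v w t)
  case Leaf then show ?case using join_some[OF Leaf(2,3)] by auto
next
  case (Node a us)
  then obtain ts where t: "t = Node a ts" and l: "list_all2 prefix_tree us ts" by (auto simp: Node_prefix)
  show ?case
  proof (cases v)
    case Leaf then show ?thesis by simp
  next
    case v: (Node b vs)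
    show ?thesis
    proof (cases w)
      case Leaf then show ?thesis by simp
    next
      case w: (Node c ws)
      from Node.prems t v w have bc: "b = a" "c = a" and lv: "list_all2 prefix_tree vs ts"
        and lw: "list_all2 prefix_tree ws ts" by auto
      define n where "n = length us"
      have len: "length ts = n" "length vs = n" "length ws = n" using l lv lw n_def by (auto simp: list_all2_lengthD)
      have "\<forall>i. i < n \<longrightarrow> (\<exists>x. join (vs!i) (ws!i) = Some x)"
        using join_some lv lw len by (auto simp: list_all2_conv_all_nth) blast
      then obtain f where f: "\<forall>i. i < n \<longrightarrow> join (vs!i) (ws!i) = Some (f i)" by metis
      define xs where "xs = map f [0..<n]"
      have jx: "join v w = Some (Node a xs)"
        unfolding v w bc by (rule join_Node) (use f len n_def xs_def in auto)
      have c: "\<forall>i<n. join (us!i \<sqinter>\<^sub>t vs!i) (us!i \<sqinter>\<^sub>t ws!i) = Some (us!i \<sqinter>\<^sub>t xs!i)"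
      proof (intro allI impI)
        fix i assume i: "i < n"
        have "map_option (\<lambda>x. us!i \<sqinter>\<^sub>t x) (join (vs!i) (ws!i)) = join (us!i \<sqinter>\<^sub>t vs!i) (us!i \<sqinter>\<^sub>t ws!i)"
          by (rule Node.IH[of "us!i" "ts!i"]) (use i n_def l lv lw len in \<open>auto simp: list_all2_conv_all_nth\<close>)
        then show "join (us!i \<sqinter>\<^sub>t vs!i) (us!i \<sqinter>\<^sub>t ws!i) = Some (us!i \<sqinter>\<^sub>t xs!i)"
          using f i xs_def by simp
      qed
      show ?thesis unfolding jx using len n_def xs_def v w bc c
        by (simp del: join.simps) (rule sym, rule join_Node, auto)
    qed
  qed
qed

theorem proposition3p5:
  fixes G :: "'a set" and ar :: "'a \<Rightarrow> nat"
  assumes "finite G" and "\<forall>a \<in> G. ar a \<ge> 1"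
  shows
    \<comment> \<open>the prefix relation is a partial order on G-trees\<close>
    "(\<forall>t. is_gtree G ar t \<longrightarrow> t \<preceq>\<^sub>t t)
     \<and> (\<forall>s t. is_gtree G ar s \<and> is_gtree G ar t \<and> s \<preceq>\<^sub>t t \<and> t \<preceq>\<^sub>t s \<longrightarrow> s = t)
     \<and> (\<forall>r s t. is_gtree G ar r \<and> is_gtree G ar s \<and> is_gtree G ar t \<and> r \<preceq>\<^sub>t s \<and> s \<preceq>\<^sub>t t \<longrightarrow> r \<preceq>\<^sub>t t)
     \<comment> \<open>meet-semilattice for the intersection\<close>
     \<and> (\<forall>s t. is_gtree G ar s \<and> is_gtree G ar t \<longrightarrow>
           is_gtree G ar (s \<sqinter>\<^sub>t t) \<and> s \<sqinter>\<^sub>t t \<preceq>\<^sub>t s \<and> s \<sqinter>\<^sub>t t \<preceq>\<^sub>t t \<and>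
           (\<forall>u. is_gtree G ar u \<and> u \<preceq>\<^sub>t s \<and> u \<preceq>\<^sub>t t \<longrightarrow> u \<preceq>\<^sub>t s \<sqinter>\<^sub>t t))
     \<comment> \<open>every interval is a distributive lattice for intersection and union\<close>
     \<and> (\<forall>s t. is_gtree G ar s \<and> is_gtree G ar t \<and> s \<preceq>\<^sub>t t \<longrightarrow>
          (\<forall>u \<in> interval G ar s t. \<forall>v \<in> interval G ar s t.
              u \<sqinter>\<^sub>t v \<in> interval G ar s t
            \<and> (\<forall>z \<in> interval G ar s t. z \<preceq>\<^sub>t u \<and> z \<preceq>\<^sub>t v \<longrightarrow> z \<preceq>\<^sub>t u \<sqinter>\<^sub>t v)
            \<and> (\<exists>x. join u v = Some x \<and> x \<in> interval G ar s t \<and> u \<preceq>\<^sub>t x \<and> v \<preceq>\<^sub>t x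
                   \<and> (\<forall>z \<in> interval G ar s t. u \<preceq>\<^sub>t z \<and> v \<preceq>\<^sub>t z \<longrightarrow> x \<preceq>\<^sub>t z)))
        \<and> (\<forall>u \<in> interval G ar s t. \<forall>v \<in> interval G ar s t. \<forall>w \<in> interval G ar s t.
              map_option (\<lambda>x. u \<sqinter>\<^sub>t x) (join v w) = join (u \<sqinter>\<^sub>t v) (u \<sqinter>\<^sub>t w)))"
proof -
  have gi: "is_gtree G ar x" if "x \<preceq>\<^sub>t t" "is_gtree G ar t" for x t
    using prefix_gtree that by blast
  show ?thesis
    apply (intro conjI allI impI ballI)
    apply (simp add: prefix_refl)
    apply (blast intro: prefix_antisym)
    apply (blast intro: prefix_trans)
    apply (blast intro: gi meet_le1)
    apply (rule meet_le1)
    apply (rule meet_le2)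
    apply (blast intro: meet_glb)
    apply (auto simp: interval_def intro: gi meet_le1 meet_glb prefix_trans[OF meet_le1])[2]
    subgoal for s t u v
      using join_some[of u t v] unfolding interval_def
      by (auto intro: gi prefix_trans)
    subgoal for s t u v w
      unfolding interval_def by (auto intro: distrib)
    done
qed

end
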